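(* Let $\underline\rho=(\rho_1,\dots,\rho_\ell)$ be a non-decreasing tuple of integers with $\rho_1\ge2$, and let $n$ be an integer. Then there exists a changemaker vector $\bm\sigma$ with stable coefficients $\underline\rho$ and $\bm\sigma\cdot\bm\sigma=n$ if and only if $n\ge N-1$, where \[ N=\sum_{i=1}^\ell\rho_i^2+\max_{1\le k\le\ell}\Big(\rho_k-\sum_{i=1}^{k-1}\rho_i\Big). \]
   Context: A changemaker vector is a nonzero $\bm\sigma\in\mathbb{Z}^r$ (standard pairing) such that for some orthonormal basis $\bm e_1,\dots,\bm e_r$, $\bm\sigma=\sum\sigma_i\bm e_i$ with $\sigma_1=1$ and $\sigma_{i-1}\le\sigma_i\le1+\sigma_1+\dots+\sigma_{i-1}$ for $i=2,\dots,r$. If $m$ is minimal with $\sigma_m\ge2$, the stable coefficients of $\bm\sigma$ are the tuple $(\sigma_m,\dots,\sigma_r)$. *)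

theory Defs
  imports Main
begin

text \<open>Vectors of Z^r are represented as int lists of length r, with the standard pairing.\<close>

definition dotp :: "int list \<Rightarrow> int list \<Rightarrow> int" where
  "dotp x y = sum_list (map2 (*) x y)"

definition orthonormal_basis :: "nat \<Rightarrow> int list list \<Rightarrow> bool" where
  "orthonormal_basis r es \<longleftrightarrow> length es = r \<and> (\<forall>e\<in>set es. length e = r) \<and>
     (\<forall>i<r. \<forall>j<r. dotp (es!i) (es!j) = (if i = j then 1 else 0))"

definition lincomb :: "nat \<Rightarrow> int list \<Rightarrow> int list list \<Rightarrow> int list" where
  "lincomb r c es = map (\<lambda>j. \<Sum>i<length c. c!i * (es!i)!j) [0..<r]"

text \<open>Changemaker conditions on a coefficient tuple (sigma_1,...,sigma_r) (0-indexed here).\<close>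
definition changemaker_coeffs :: "int list \<Rightarrow> bool" where
  "changemaker_coeffs c \<longleftrightarrow> c \<noteq> [] \<and> c!0 = 1 \<and>
     (\<forall>i. 1 \<le> i \<and> i < length c \<longrightarrow> c!(i-1) \<le> c!i \<and> c!i \<le> 1 + sum_list (take i c))"

definition changemaker_rep :: "int list \<Rightarrow> int list \<Rightarrow> int list list \<Rightarrow> bool" where
  "changemaker_rep v c es \<longleftrightarrow> v \<noteq> replicate (length v) 0 \<and>
     orthonormal_basis (length v) es \<and> length c = length v \<and>
     changemaker_coeffs c \<and> v = lincomb (length v) c es"

definition changemaker :: "int list \<Rightarrow> bool" where
  "changemaker v \<longleftrightarrow> (\<exists>c es. changemaker_rep v c es)"

definition stable_coeffs :: "int list \<Rightarrow> int list" where
  "stable_coeffs c = (if \<exists>i<length c. c!i \<ge> 2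
      then drop (LEAST i. i < length c \<and> c!i \<ge> 2) c else [])"

definition bound_N :: "int list \<Rightarrow> int" where
  "bound_N \<rho> = (\<Sum>i<length \<rho>. (\<rho>!i)^2) +
     Max {\<rho>!k - sum_list (take k \<rho>) | k. k < length \<rho>}"

end

theory Submission
  imports Defs
begin

lemma dotp_nth: "length x = length y \<Longrightarrow> dotp x y = (\<Sum>j<length x. x!j * y!j)"
  unfolding dotp_def by (simp add: sum_list_sum_nth atLeast0LessThan)

lemma norm_lincomb:
  assumes ob: "orthonormal_basis r es" and lc: "length c = r"
  shows "dotp (lincomb r c es) (lincomb r c es) = (\<Sum>i<r. (c!i)^2)"
proof -
  have len: "length (lincomb r c es) = r" unfolding lincomb_def by simp
  have nth: "lincomb r c es ! j = (\<Sum>i<r. c!i * es!i!j)" if "j < r" for j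
    using that lc unfolding lincomb_def by simp
  have "dotp (lincomb r c es) (lincomb r c es)
      = (\<Sum>j<r. (\<Sum>i<r. c!i * es!i!j) * (\<Sum>k<r. c!k * es!k!j))"
    by (simp add: dotp_nth len nth)
  also have "\<dots> = (\<Sum>j<r. \<Sum>i<r. \<Sum>k<r. c!i * c!k * (es!i!j * es!k!j))"
    by (simp add: sum_product algebra_simps)
  also have "\<dots> = (\<Sum>i<r. \<Sum>j<r. \<Sum>k<r. c!i * c!k * (es!i!j * es!k!j))"
    by (rule sum.swap)
  also have "\<dots> = (\<Sum>i<r. \<Sum>k<r. \<Sum>j<r. c!i * c!k * (es!i!j * es!k!j))"
    by (rule sum.cong[OF refl], rule sum.swap)
  also have "\<dots> = (\<Sum>i<r. \<Sum>k<r. c!i * c!k * dotp (es!i) (es!k))"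
  proof (intro sum.cong refl)
    fix i k assume i: "i \<in> {..<r}" and k: "k \<in> {..<r}"
    have "length (es!i) = r" "length (es!k) = r" using ob i k
      unfolding orthonormal_basis_def by auto
    then show "(\<Sum>j<r. c!i * c!k * (es!i!j * es!k!j)) = c!i * c!k * dotp (es!i) (es!k)"
      by (simp add: dotp_nth sum_distrib_left)
  qed
  also have "\<dots> = (\<Sum>i<r. \<Sum>k<r. c!i * c!k * (if i = k then 1 else 0))"
    using ob unfolding orthonormal_basis_def by (intro sum.cong refl) auto
  also have "\<dots> = (\<Sum>i<r. (c!i)^2)"
    by (simp add: power2_eq_square if_distrib sum.delta cong: if_cong)
  finally show ?thesis .
qed

lemma cm_pos:
  assumes "changemaker_coeffs c" "i < length c" shows "c!i \<ge> 1"
  using assms(2)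
proof (induction i)
  case 0 then show ?case using assms(1) unfolding changemaker_coeffs_def by simp
next
  case (Suc i)
  then have "c!i \<le> c!(Suc i)" using assms(1) unfolding changemaker_coeffs_def
    by (metis diff_Suc_1 le_add1 plus_1_eq_Suc)
  then show ?case using Suc by simp
qed

lemma sumsq_list: "(\<Sum>i<length xs. (xs!i)^2) = sum_list (map (\<lambda>x. x^2) (xs::int list))"
  by (simp add: sum_list_sum_nth atLeast0LessThan)

definition stdb :: "nat \<Rightarrow> int list list" where
  "stdb r = map (\<lambda>i. map (\<lambda>j. if i = j then 1 else 0) [0..<r]) [0..<r]"

lemma stdb_ob: "orthonormal_basis r (stdb r)"
  unfolding orthonormal_basis_def
proof (intro conjI allI impI)
  show "length (stdb r) = r" by (simp add: stdb_def)
  show "\<forall>e\<in>set (stdb r). length e = r" by (auto simp: stdb_def)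
  fix i j assume i: "i < r" and j: "j < r"
  have "dotp (stdb r ! i) (stdb r ! j) = (\<Sum>k<r. (if i = k then 1 else 0) * (if j = k then 1 else 0))"
    using i j by (simp add: dotp_nth stdb_def)
  also have "\<dots> = (if i = j then 1 else 0)"
    using i j by (cases "i = j") (auto intro!: sum.neutral simp: if_distrib sum.delta cong: if_cong)
  finally show "dotp (stdb r ! i) (stdb r ! j) = (if i = j then 1 else 0)" .
qed

lemma stdb_lc: "lincomb (length c) c (stdb (length c)) = c"
proof (rule nth_equalityI)
  show "length (lincomb (length c) c (stdb (length c))) = length c" by (simp add: lincomb_def)
  fix j assume "j < length (lincomb (length c) c (stdb (length c)))"
  then have j: "j < length c" by (simp add: lincomb_def)
  have "lincomb (length c) c (stdb (length c)) ! j = (\<Sum>i<length c. c!i * (if i = j then 1 else 0))"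
    using j by (simp add: lincomb_def stdb_def)
  also have "\<dots> = c!j" using j by (simp add: if_distrib sum.delta cong: if_cong)
  finally show "lincomb (length c) c (stdb (length c)) ! j = c ! j" .
qed

theorem proposition3p2:
  fixes \<rho> :: "int list" and n :: int
  assumes "\<rho> \<noteq> []" and "sorted \<rho>" and "\<rho>!0 \<ge> 2"
  shows "(\<exists>v c es. changemaker_rep v c es \<and> stable_coeffs c = \<rho> \<and> dotp v v = n)
         \<longleftrightarrow> n \<ge> bound_N \<rho> - 1"
proof -
  let ?S = "{\<rho>!k - sum_list (take k \<rho>) | k. k < length \<rho>}"
  let ?Q = "sum_list (map (\<lambda>x. x^2) \<rho>)"
  have finS: "finite ?S" by simp
  have neS: "?S \<noteq> {}" using assms(1) by auto
  have bN: "bound_N \<rho> = ?Q + Max ?S" unfolding bound_N_def sumsq_list ..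
  have M0: "Max ?S \<ge> \<rho>!0"
  proof -
    have "\<rho>!0 - sum_list (take 0 \<rho>) \<in> ?S" using assms(1) by blast
    then show ?thesis using finS by (simp add: Max_ge_iff)
  qed
  show ?thesis
  proof
    assume "\<exists>v c es. changemaker_rep v c es \<and> stable_coeffs c = \<rho> \<and> dotp v v = n"
    then obtain v c es where rep: "changemaker_rep v c es" and st: "stable_coeffs c = \<rho>"
      and nv: "dotp v v = n" by blast
    have cc: "changemaker_coeffs c" and lc: "length c = length v"
      and ob: "orthonormal_basis (length v) es" and vl: "v = lincomb (length v) c es"
      using rep unfolding changemaker_rep_def by auto
    have n_eq: "n = sum_list (map (\<lambda>x. x^2) c)"
      using norm_lincomb[OF ob lc] vl nv lc sumsq_list[of c] by simp
    have ex: "\<exists>i<length c. c!i \<ge> 2"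
      using st assms(1) unfolding stable_coeffs_def by (auto split: if_splits)
    define m where "m = (LEAST i. i < length c \<and> c!i \<ge> 2)"
    have m1: "m < length c" "c!m \<ge> 2" using LeastI_ex[OF ex] unfolding m_def by auto
    have rho: "\<rho> = drop m c" using st ex unfolding stable_coeffs_def m_def by simp
    have below: "c!i = 1" if "i < m" for i
    proof -
      have "\<not> (i < length c \<and> c!i \<ge> 2)" using not_less_Least[OF that[unfolded m_def]] .
      then show ?thesis using cm_pos[OF cc, of i] that m1 by auto
    qed
    have c0: "c!0 = 1" using cc unfolding changemaker_coeffs_def by simp
    have mpos: "m \<ge> 1" using m1 c0 by (cases m) auto
    have tk: "take m c = replicate m 1"
      by (rule nth_equalityI) (use m1 below in auto)
    have cdec: "c = replicate m 1 @ \<rho>" using tk rho by (metis append_take_drop_id)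
    have n2: "n = int m + ?Q" using n_eq cdec by (simp add: sum_list_replicate)
    have "Max ?S \<le> int m + 1"
    proof (subst Max_le_iff[OF finS neS], clarify)
      fix k assume k: "k < length \<rho>"
      have "c!(m+k) \<le> 1 + sum_list (take (m+k) c)"
        using cc k rho mpos m1 unfolding changemaker_coeffs_def by auto
      moreover have "c!(m+k) = \<rho>!k" using cdec by (simp add: nth_append)
      moreover have "take (m+k) c = replicate m 1 @ take k \<rho>" using cdec by simp
      ultimately show "\<rho>!k - sum_list (take k \<rho>) \<le> int m + 1" by (simp add: sum_list_replicate)
    qed
    then show "n \<ge> bound_N \<rho> - 1" using bN n2 by simp
  next
    assume hn: "n \<ge> bound_N \<rho> - 1"
    define m where "m = nat (n - ?Q)"
    have mge: "int m \<ge> Max ?S - 1" using hn bN unfolding m_def by simp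
    have mpos: "m \<ge> 1" using mge M0 assms(3) by simp
    have nm: "n = int m + ?Q" using mge M0 assms(3) hn bN unfolding m_def by simp
    define c where "c = replicate m 1 @ \<rho>"
    have bnd: "\<rho>!k \<le> 1 + int m + sum_list (take k \<rho>)" if "k < length \<rho>" for k
    proof -
      have "\<rho>!k - sum_list (take k \<rho>) \<in> ?S" using that by blast
      then have "\<rho>!k - sum_list (take k \<rho>) \<le> Max ?S" using finS by simp
      then show ?thesis using mge by simp
    qed
    have cc: "changemaker_coeffs c"
      unfolding changemaker_coeffs_def
    proof (intro conjI)
      show "c \<noteq> []" using mpos c_def by simp
      show "c!0 = 1" using mpos c_def by (simp add: nth_append)
      show "\<forall>i. 1 \<le> i \<and> i < length c \<longrightarrow> c!(i-1) \<le> c!i \<and> c!i \<le> 1 + sum_list (take i c)"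
      proof (intro allI impI)
      fix i assume i: "1 \<le> i \<and> i < length c"
      show "c!(i-1) \<le> c!i \<and> c!i \<le> 1 + sum_list (take i c)"
      proof (cases "i < m")
        case True then show ?thesis using i by (auto simp add: c_def nth_append sum_list_replicate)
      next
        case False
        define k where "k = i - m"
        have ik: "i = m + k" using False k_def by simp
        have kl: "k < length \<rho>" using i ik c_def by simp
        have ci: "c!i = \<rho>!k" using ik by (simp add: c_def nth_append)
        have t: "take i c = replicate m 1 @ take k \<rho>" using ik by (simp add: c_def)
        have up: "c!i \<le> 1 + sum_list (take i c)" using bnd[OF kl] ci t
          by (simp add: sum_list_replicate)
        have lo: "c!(i-1) \<le> c!i"
        proof (cases k)
          case 0
          then have "c!(i-1) = 1" using ik mpos by (simp add: c_def nth_append)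
          then show ?thesis using ci 0 assms(3) by simp
        next
          case (Suc k')
          then have "c!(i-1) = \<rho>!k'" using ik by (simp add: c_def nth_append)
          then show ?thesis using ci Suc kl assms(2) by (simp add: sorted_iff_nth_mono)
        qed
        show ?thesis using up lo by simp
      qed
      qed
    qed
    have ex: "\<exists>i<length c. c!i \<ge> 2" 
      by (rule exI[of _ m]) (use assms(1,3) in \<open>simp add: c_def nth_append\<close>)
    have least: "(LEAST i. i < length c \<and> c!i \<ge> 2) = m"
    proof (rule Least_equality)
      show "m < length c \<and> c!m \<ge> 2" using assms(1,3) by (simp add: c_def nth_append)
      fix y assume "y < length c \<and> c!y \<ge> 2"
      then show "m \<le> y" by (cases "y < m") (auto simp: c_def nth_append)
    qed
    have st: "stable_coeffs c = \<rho>" using ex least unfolding stable_coeffs_def by (simp add: c_def)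
    have nz: "c \<noteq> replicate (length c) 0"
    proof
      assume "c = replicate (length c) 0"
      then have "c!0 = 0" using mpos c_def by (metis cc changemaker_coeffs_def length_greater_0_conv nth_replicate)
      then show False using cc unfolding changemaker_coeffs_def by simp
    qed
    have rep: "changemaker_rep c c (stdb (length c))"
      unfolding changemaker_rep_def using nz stdb_ob cc stdb_lc by simp
    have "dotp c c = n"
      using norm_lincomb[OF stdb_ob[of "length c"], of c] stdb_lc[of c] sumsq_list[of c] nm
      by (simp add: c_def sum_list_replicate)
    then show "\<exists>v c es. changemaker_rep v c es \<and> stable_coeffs c = \<rho> \<and> dotp v v = n"
      using rep st by blast
  qed
qed

end
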